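(* Let $p$ be a prime, $e\ge1$, and $G$ a finite abelian group of order $p^e$. Let $\psi^p\colon\mathbf{Z}[G]\to\mathbf{Z}[G]$ be the ring homomorphism with $\psi^p(g)=g^p$ for $g\in G$. If $\rho$ is a representation of level $k>0$ and there is no representation $\tau$ with $\psi\tau=\rho$, then $\psi^p(b_\rho)=0$.
   Context: A representation is a group homomorphism $\rho\colon G\to\mathbf{C}^*$; its level is $k$ if $\rho(G)$ has $p^k$ elements. For a representation $\tau$, $\psi\tau$ is the representation $x\mapsto\tau(x^p)$. Write $\omega=\exp(2\pi i/p)$. For $\rho$ of level $k>0$ set $b_\rho=\sum_{x\in G,\ \rho(x)=1}x-\sum_{\xi\in G,\ \rho(\xi)=\omega}\xi\in\mathbf{Z}[G]$. *)

theory Defs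
  imports "HOL-Algebra.Coset" "HOL-Computational_Algebra.Primes" Complex_Main
begin

definition is_rep :: "('a, 'b) monoid_scheme \<Rightarrow> ('a \<Rightarrow> complex) \<Rightarrow> bool" where
  "is_rep G \<rho> \<longleftrightarrow> (\<forall>x\<in>carrier G. \<rho> x \<noteq> 0) \<and>
     (\<forall>x\<in>carrier G. \<forall>y\<in>carrier G. \<rho> (x \<otimes>\<^bsub>G\<^esub> y) = \<rho> x * \<rho> y)"

definition rep_level :: "('a, 'b) monoid_scheme \<Rightarrow> nat \<Rightarrow> ('a \<Rightarrow> complex) \<Rightarrow> nat \<Rightarrow> bool" where
  "rep_level G p \<rho> k \<longleftrightarrow> card (\<rho> ` carrier G) = p ^ k"

definition rep_psi :: "('a, 'b) monoid_scheme \<Rightarrow> nat \<Rightarrow> ('a \<Rightarrow> complex) \<Rightarrow> ('a \<Rightarrow> complex)" where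
  "rep_psi G p \<tau> = (\<lambda>x. \<tau> (x [^]\<^bsub>G\<^esub> p))"

text \<open>Elements of the integral group ring Z[G] of a finite group G are represented
as functions a :: 'a \<Rightarrow> int (coefficient of each group element) supported on carrier G;
the group element g corresponds to the indicator of g.\<close>
definition grp_ring_elem :: "('a, 'b) monoid_scheme \<Rightarrow> ('a \<Rightarrow> int) \<Rightarrow> bool" where
  "grp_ring_elem G a \<longleftrightarrow> (\<forall>x. x \<notin> carrier G \<longrightarrow> a x = 0)"

text \<open>psi^p on Z[G]: the additive (Z-linear) extension of g \<mapsto> g^p, i.e.
  psi^p(\<Sum>_x a_x x) = \<Sum>_x a_x x^p; the coefficient of y is the sum of a_x over x with x^p = y.\<close>
definition psi_ring :: "('a, 'b) monoid_scheme \<Rightarrow> nat \<Rightarrow> ('a \<Rightarrow> int) \<Rightarrow> ('a \<Rightarrow> int)" where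
  "psi_ring G p a = (\<lambda>y. if y \<in> carrier G
      then (\<Sum>x\<in>{x\<in>carrier G. x [^]\<^bsub>G\<^esub> p = y}. a x) else 0)"

definition b_elem :: "('a, 'b) monoid_scheme \<Rightarrow> nat \<Rightarrow> ('a \<Rightarrow> complex) \<Rightarrow> ('a \<Rightarrow> int)" where
  "b_elem G p \<rho> = (\<lambda>x.
      (if x \<in> carrier G \<and> \<rho> x = 1 then 1 else 0)
    - (if x \<in> carrier G \<and> \<rho> x = exp (2 * pi * \<i> / of_nat p) then 1 else 0))"

end

theory Submission
  imports Defs "HOL-Algebra.Multiplicative_Group"
begin


lemma nth_root_ex:
  assumes "(w::complex) \<noteq> 0" "n > 0" shows "\<exists>c. c ^ n = w"
proof -
  obtain f where f: "f ` {z::complex. z ^ n = 1} = {z. z ^ n = w}"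
    using bij_betw_nth_root_unity[OF assms] unfolding bij_betw_def by blast
  have "f 1 \<in> f ` {z::complex. z ^ n = 1}" by simp
  then have "f 1 \<in> {z. z ^ n = w}" using f by simp
  then show ?thesis by blast
qed

context comm_group begin

lemma inv_as_pow:
  assumes "x \<in> carrier G" "finite (carrier G)"
  shows "inv x = x [^] (order G - 1)"
proof -
  have "order G > 0" using assms order_gt_0_iff_finite by blast
  then have "x [^] (order G - 1) \<otimes> x = x [^] order G"
    using assms by (metis Suc_diff_1 nat_pow_Suc)
  also have "\<dots> = \<one>" using pow_order_eq_1 assms by blast
  finally show ?thesis using assms by (metis inv_equality nat_pow_closed)
qed

lemma closed_pow:
  assumes "H \<subseteq> carrier G" "\<one> \<in> H" "\<forall>x\<in>H. \<forall>y\<in>H. x \<otimes> y \<in> H" "h \<in> H"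
  shows "h [^] (n::nat) \<in> H"
  using assms by (induction n) auto

lemma chi_pow:
  fixes \<chi> :: "'a \<Rightarrow> complex"
  assumes "H \<subseteq> carrier G" "\<one> \<in> H" "\<forall>x\<in>H. \<forall>y\<in>H. x \<otimes> y \<in> H" "h \<in> H"
    "\<forall>x\<in>H. \<forall>y\<in>H. \<chi> (x \<otimes> y) = \<chi> x * \<chi> y" "\<chi> \<one> = 1"
  shows "\<chi> (h [^] (n::nat)) = \<chi> h ^ n"
proof (induction n)
  case (Suc n) then show ?case using assms closed_pow[OF assms(1-4), of n] by (simp add: mult.commute)
qed (simp add: assms)

lemma extension:
  assumes fin: "finite (carrier G)"
  shows "H \<subseteq> carrier G \<Longrightarrow> \<one> \<in> H \<Longrightarrow> \<forall>x\<in>H. \<forall>y\<in>H. x \<otimes> y \<in> H \<Longrightarrow>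
     \<forall>x\<in>H. \<chi> x \<noteq> 0 \<Longrightarrow> \<forall>x\<in>H. \<forall>y\<in>H. \<chi> (x \<otimes> y) = \<chi> x * \<chi> y \<Longrightarrow>
     \<exists>\<tau>. is_rep G \<tau> \<and> (\<forall>x\<in>H. \<tau> x = \<chi> x)"
proof (induction "card (carrier G - H)" arbitrary: H \<chi> rule: less_induct)
  case less
  note sub = less.prems(1) and one = less.prems(2) and cl = less.prems(3)
    and nz = less.prems(4) and hom = less.prems(5)
  show ?case
  proof (cases "H = carrier G")
    case True
    then show ?thesis using nz hom unfolding is_rep_def by auto
  next
    case False
    then obtain g where g: "g \<in> carrier G" "g \<notin> H" using sub by blast
    have chi1: "\<chi> \<one> = 1"
    proof -
      have "\<chi> \<one> = \<chi> \<one> * \<chi> \<one>" using hom one by (metis one_closed l_one)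
      then show ?thesis using nz one by simp
    qed
    have invH: "inv h \<in> H" if "h \<in> H" for h
      using inv_as_pow[OF _ fin] closed_pow[OF sub one cl that] that sub by auto
    have ex: "\<exists>m::nat. m > 0 \<and> g [^] m \<in> H"
      proof -
      have "g [^] order G \<in> H" using pow_order_eq_1[OF g(1)] one by simp
      moreover have "order G > 0" using order_gt_0_iff_finite fin by blast
      ultimately show ?thesis by blast
    qed
    define m where "m = (LEAST m::nat. m > 0 \<and> g [^] m \<in> H)"
    have m: "m > 0" "g [^] m \<in> H" using LeastI_ex[OF ex] unfolding m_def by auto
    have mmin: "\<not> (r > 0 \<and> g [^] r \<in> H)" if "r < m" for r
      using not_less_Least[OF that[unfolded m_def]] m_def by blast
    have mdvd: "m dvd d" if "g [^] d \<in> H" for d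
    proof -
      define q where "q = d div m"
      define r where "r = d mod m"
      have d: "d = m * q + r" unfolding q_def r_def by simp
      have "g [^] d = (g [^] m) [^] q \<otimes> g [^] r"
        using g by (simp add: d nat_pow_mult nat_pow_pow)
      then have "g [^] r = inv ((g [^] m) [^] q) \<otimes> g [^] d"
        using g by (simp add: m_assoc[symmetric])
      moreover have "inv ((g [^] m) [^] q) \<in> H"
        using invH closed_pow[OF sub one cl m(2)] by blast
      ultimately have "g [^] r \<in> H" using cl that by auto
      moreover have "r < m" unfolding r_def using m by simp
      ultimately have "r = 0" using mmin[of r] by auto
      then show ?thesis using d by simp
    qed
    have cnz: "\<chi> (g [^] m) \<noteq> 0" using nz m by auto
    obtain c where c: "c ^ m = \<chi> (g [^] m)"
      using nth_root_ex[OF cnz m(1)] by blast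
    have c0: "c \<noteq> 0" using c cnz m(1) by (metis zero_power)
    have chig: "\<chi> (g [^] d) = c ^ d" if gdH: "g [^] d \<in> H" for d
    proof -
      obtain q where q: "d = m * q" using mdvd[OF gdH] by blast
      have "\<chi> (g [^] d) = \<chi> ((g [^] m) [^] q)" using g by (simp add: q nat_pow_pow)
      also have "\<dots> = \<chi> (g [^] m) ^ q" using chi_pow[OF sub one cl m(2) hom chi1] .
      also have "\<dots> = c ^ d" by (simp add: q c power_mult)
      finally show ?thesis .
    qed
    have wd: "\<chi> h * c ^ n = \<chi> h' * c ^ n'"
      if "h \<in> H" "h' \<in> H" "h \<otimes> g [^] n = h' \<otimes> g [^] n'" for h h' n n'
    proof -
      have gen: "\<chi> h * c ^ n = \<chi> h' * c ^ n'"
        if hh: "h \<in> H" "h' \<in> H" "h \<otimes> g [^] n = h' \<otimes> g [^] n'" "n' \<le> n" for h h' n n'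
      proof -
        obtain d where d: "n = n' + d" using hh(4) le_Suc_ex by blast
        have hc: "h \<in> carrier G" "h' \<in> carrier G" using hh sub by auto
        have "(h \<otimes> g [^] d) \<otimes> g [^] n' = h' \<otimes> g [^] n'"
          using hh(3) hc g by (simp add: d m_assoc nat_pow_mult[symmetric] nat_pow_comm)
        then have e: "h \<otimes> g [^] d = h'" using hc g by (metis m_closed nat_pow_closed right_cancel)
        then have "g [^] d = inv h \<otimes> h'" using hc g
          by (metis inv_solve_left nat_pow_closed)
        then have gd: "g [^] d \<in> H" using invH hh cl by auto
        have "\<chi> h' = \<chi> h * c ^ d" using e hom hh gd chig by metis
        then show ?thesis by (simp add: d power_add)
      qed
      show ?thesis using gen[of h h' n n'] gen[of h' h n' n] that by (metis nat_le_linear)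
    qed
    define H' where "H' = {h \<otimes> g [^] (n::nat) | h n. h \<in> H}"
    define \<chi>' where "\<chi>' x = (SOME v. \<exists>h\<in>H. \<exists>n::nat. x = h \<otimes> g [^] n \<and> v = \<chi> h * c ^ n)" for x
    have chi'eq: "\<chi>' (h \<otimes> g [^] n) = \<chi> h * c ^ n" if "h \<in> H" for h n
    proof -
      have "\<exists>h'\<in>H. \<exists>n'. h \<otimes> g [^] n = h' \<otimes> g [^] n' \<and> \<chi>' (h \<otimes> g [^] n) = \<chi> h' * c ^ n'"
        unfolding \<chi>'_def by (rule someI_ex) (use that in blast)
      then show ?thesis using wd that by metis
    qed
    have HH': "H \<subseteq> H'"
    proof
      fix h assume "h \<in> H"
      moreover have "h = h \<otimes> g [^] (0::nat)" using \<open>h \<in> H\<close> sub by auto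
      ultimately show "h \<in> H'" unfolding H'_def by blast
    qed
    have gH': "g \<in> H'"
    proof -
      have "g = \<one> \<otimes> g [^] (1::nat)" using g by simp
      then show ?thesis unfolding H'_def using one by blast
    qed
    have sub': "H' \<subseteq> carrier G" unfolding H'_def using sub g by auto
    have one': "\<one> \<in> H'" using HH' one by auto
    have mulform: "(h \<otimes> g [^] n) \<otimes> (h' \<otimes> g [^] n') = (h \<otimes> h') \<otimes> g [^] (n + n' :: nat)"
      if "h \<in> H" "h' \<in> H" for h h' n n'
    proof -
      have "g [^] (n+n') = g [^] n \<otimes> g [^] n'" using g by (simp add: nat_pow_mult)
      moreover have "h \<in> carrier G" "h' \<in> carrier G" using that sub by auto
      ultimately show ?thesis using g by (simp add: m_ac)
    qed
    have cl': "\<forall>x\<in>H'. \<forall>y\<in>H'. x \<otimes> y \<in> H'"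
      proof (intro ballI)
      fix x y assume "x \<in> H'" "y \<in> H'"
      then obtain h h' and n n' :: nat where "x = h \<otimes> g [^] n" "y = h' \<otimes> g [^] n'" "h \<in> H" "h' \<in> H"
        unfolding H'_def by blast
      then show "x \<otimes> y \<in> H'" using mulform cl unfolding H'_def by blast
    qed
    have nz': "\<forall>x\<in>H'. \<chi>' x \<noteq> 0" unfolding H'_def using chi'eq nz c0 by auto
    have hom': "\<forall>x\<in>H'. \<forall>y\<in>H'. \<chi>' (x \<otimes> y) = \<chi>' x * \<chi>' y"
    proof (intro ballI)
      fix x y assume "x \<in> H'" "y \<in> H'"
      then obtain h h' and n n' :: nat where "x = h \<otimes> g [^] n" "y = h' \<otimes> g [^] n'" "h \<in> H" "h' \<in> H"
        unfolding H'_def by blast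
      note xy = this
      have "\<chi>' (x \<otimes> y) = \<chi>' ((h \<otimes> h') \<otimes> g [^] (n + n'))" using xy mulform by simp
      also have "\<dots> = \<chi> (h \<otimes> h') * c ^ (n + n')" using chi'eq cl xy by blast
      also have "\<dots> = (\<chi> h * c ^ n) * (\<chi> h' * c ^ n')" using hom xy by (simp add: power_add)
      also have "\<dots> = \<chi>' x * \<chi>' y" using chi'eq xy by simp
      finally show "\<chi>' (x \<otimes> y) = \<chi>' x * \<chi>' y" .
    qed
    have lt: "card (carrier G - H') < card (carrier G - H)"
      using HH' gH' g fin by (intro psubset_card_mono) auto
    obtain \<tau> where \<tau>: "is_rep G \<tau>" "\<forall>x\<in>H'. \<tau> x = \<chi>' x"
      using less.hyps[OF lt sub' one' cl' nz' hom'] by blast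
    have "\<forall>x\<in>H. \<tau> x = \<chi> x"
    proof
      fix x assume x: "x \<in> H"
      have "\<chi>' (x \<otimes> g [^] (0::nat)) = \<chi> x" using chi'eq[OF x, of 0] by simp
      moreover have "x \<otimes> g [^] (0::nat) = x" using x sub by auto
      ultimately show "\<tau> x = \<chi> x" using \<tau>(2) HH' x by auto
    qed
    then show ?thesis using \<tau>(1) by blast
  qed
qed

end


context comm_group begin

lemma rep_one: assumes "is_rep G \<rho>" shows "\<rho> \<one> = 1"
proof -
  have "\<rho> \<one> = \<rho> \<one> * \<rho> \<one>" using assms unfolding is_rep_def by (metis one_closed l_one)
  then show ?thesis using assms unfolding is_rep_def by auto
qed

lemma rep_pow: assumes "is_rep G \<rho>" "x \<in> carrier G" shows "\<rho> (x [^] (n::nat)) = \<rho> x ^ n"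
  using assms by (induction n) (auto simp: rep_one is_rep_def mult.commute)

lemma pow_distrib: "x \<in> carrier G \<Longrightarrow> y \<in> carrier G \<Longrightarrow> (x \<otimes> y) [^] (n::nat) = x [^] n \<otimes> y [^] n"
  by (rule pow_mult_distrib[OF m_comm]) auto

lemma torsion_trivial_gives_root:
  assumes fin: "finite (carrier G)" and rep: "is_rep G \<rho>"
    and triv: "\<forall>z\<in>carrier G. z [^] (p::nat) = \<one> \<longrightarrow> \<rho> z = 1"
  shows "\<exists>\<tau>. is_rep G \<tau> \<and> (\<forall>x\<in>carrier G. rep_psi G p \<tau> x = \<rho> x)"
proof -
  define H where "H = (\<lambda>x. x [^] p) ` carrier G"
  define \<chi> where "\<chi> y = \<rho> (SOME x. x \<in> carrier G \<and> x [^] p = y)" for y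
  have same: "\<rho> x = \<rho> x'" if "x \<in> carrier G" "x' \<in> carrier G" "x [^] p = x' [^] p" for x x'
  proof -
    have "(x \<otimes> inv x') [^] p = x [^] p \<otimes> inv (x' [^] p)"
      using that by (simp add: pow_distrib nat_pow_inv)
    also have "\<dots> = \<one>" using that by simp
    finally have "\<rho> (x \<otimes> inv x') = 1" using triv that by auto
    then have "\<rho> x * \<rho> (inv x') = 1" using rep that unfolding is_rep_def by auto
    moreover have "\<rho> x' * \<rho> (inv x') = 1" using rep that rep_one[OF rep] unfolding is_rep_def
      by (metis inv_closed r_inv)
    moreover have "\<rho> (inv x') \<noteq> 0" using rep that unfolding is_rep_def by auto
    ultimately show ?thesis by (metis mult_cancel_right)
  qed
  have chi: "\<chi> (x [^] p) = \<rho> x" if "x \<in> carrier G" for x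
  proof -
    have "(SOME x'. x' \<in> carrier G \<and> x' [^] p = x [^] p) \<in> carrier G \<and>
          (SOME x'. x' \<in> carrier G \<and> x' [^] p = x [^] p) [^] p = x [^] p"
      by (rule someI_ex) (use that in blast)
    then show ?thesis unfolding \<chi>_def using same that by metis
  qed
  have sub: "H \<subseteq> carrier G" unfolding H_def by auto
  have one: "\<one> \<in> H" unfolding H_def by (metis image_eqI nat_pow_one one_closed)
  have cl: "\<forall>x\<in>H. \<forall>y\<in>H. x \<otimes> y \<in> H"
  proof (intro ballI)
    fix x y assume "x \<in> H" "y \<in> H"
    then obtain a b where ab: "a \<in> carrier G" "b \<in> carrier G" "x = a [^] p" "y = b [^] p"
      unfolding H_def by blast
    then have "x \<otimes> y = (a \<otimes> b) [^] p" using pow_distrib by simp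
    then show "x \<otimes> y \<in> H" unfolding H_def using ab by blast
  qed
  have nz: "\<forall>x\<in>H. \<chi> x \<noteq> 0" unfolding H_def using chi rep unfolding is_rep_def by auto
  have hom: "\<forall>x\<in>H. \<forall>y\<in>H. \<chi> (x \<otimes> y) = \<chi> x * \<chi> y"
    unfolding H_def using chi rep pow_distrib[symmetric] unfolding is_rep_def by auto
  obtain \<tau> where \<tau>: "is_rep G \<tau>" "\<forall>x\<in>H. \<tau> x = \<chi> x"
    using extension[OF fin sub one cl nz hom] by blast
  have "\<forall>x\<in>carrier G. rep_psi G p \<tau> x = \<rho> x"
    unfolding rep_psi_def using \<tau>(2) chi unfolding H_def by auto
  then show ?thesis using \<tau>(1) by blast
qed

end

lemma omega_pow: "exp (2 * pi * \<i> / of_nat p) ^ k = cis (2 * pi * real k / real p)"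
proof -
  have "exp (2 * pi * \<i> / of_nat p) ^ k = exp (of_nat k * (2 * pi * \<i> / of_nat p))"
    by (metis exp_of_nat_mult)
  also have "\<dots> = cis (2 * pi * real k / real p)" by (simp add: cis_conv_exp mult_ac)
  finally show ?thesis .
qed


lemma (in comm_group) main_in:
  fixes p :: nat and \<rho> :: "'a \<Rightarrow> complex"
  assumes "prime p" and "e \<ge> 1"
    and "comm_group G" and "finite (carrier G)" and "order G = p ^ e"
    and "is_rep G \<rho>" and "rep_level G p \<rho> k" and "k > 0"
    and "\<not> (\<exists>\<tau>. is_rep G \<tau> \<and> (\<forall>x\<in>carrier G. rep_psi G p \<tau> x = \<rho> x))"
  shows "psi_ring G p (b_elem G p \<rho>) = (\<lambda>_. 0)"
proof -
  have fin: "finite (carrier G)" and rep: "is_rep G \<rho>" by fact+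
  define \<omega> where "\<omega> = exp (2 * pi * \<i> / of_nat p)"
  have p1: "p > 1" using assms(1) prime_gt_1_nat by blast
  obtain z where z: "z \<in> carrier G" "z [^] p = \<one>" "\<rho> z \<noteq> 1"
    using torsion_trivial_gives_root[OF fin rep, of p] assms(9) by blast
  have "\<rho> z ^ p = 1" using rep_pow[OF rep z(1), of p] z rep_one[OF rep] by simp
  then have "\<rho> z \<in> (\<lambda>k. cis (2 * pi * real k / real p)) ` {..<p}"
    using bij_betw_roots_unity[of p] p1 unfolding bij_betw_def by auto
  then obtain j where j: "j < p" "\<rho> z = cis (2 * pi * real j / real p)" by blast
  have j0: "j \<noteq> 0" proof assume "j = 0" then show False using j z by simp qed
  have "coprime p j" using assms(1) j j0 by (intro prime_imp_coprime) (auto dest: dvd_imp_le)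
  then have "gcd j p = 1" by (simp add: coprime_commute)
  then obtain t q where q: "j * t = p * q + 1" using bezout_nat[OF j0, of p] by auto
  have \<omega>p: "\<omega> ^ p = 1" unfolding \<omega>_def omega_pow using p1 by simp
  define w where "w = z [^] t"
  have w: "w \<in> carrier G" unfolding w_def using z by simp
  have "w [^] p = (z [^] p) [^] t" unfolding w_def using z(1) by (simp add: nat_pow_pow mult.commute)
  then have wp: "w [^] p = \<one>" using z(2) by simp
  have "\<rho> w = \<rho> z ^ t" unfolding w_def using rep_pow[OF rep z(1)] .
  also have "\<dots> = \<omega> ^ (j * t)" unfolding \<omega>_def power_mult omega_pow j(2) ..
  also have "\<dots> = \<omega>" unfolding q by (simp add: power_add power_mult \<omega>p)
  finally have \<rho>w: "\<rho> w = \<omega>" .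
  have \<omega>0: "\<omega> \<noteq> 0" unfolding \<omega>_def by simp
  show ?thesis
  proof
    fix y
    show "psi_ring G p (b_elem G p \<rho>) y = 0"
    proof (cases "y \<in> carrier G")
      case False then show ?thesis unfolding psi_ring_def by simp
    next
      case True
      define F where "F = {x \<in> carrier G. x [^] p = y}"
      define A where "A = {x \<in> F. \<rho> x = 1}"
      define B where "B = {x \<in> F. \<rho> x = \<omega>}"
      have finF: "finite F" unfolding F_def using fin by simp
      have "psi_ring G p (b_elem G p \<rho>) y =
          (\<Sum>x\<in>F. (if \<rho> x = 1 then 1 else 0) - (if \<rho> x = \<omega> then 1 else 0))"
        unfolding psi_ring_def b_elem_def F_def \<omega>_def using True by (auto intro!: sum.cong)
      also have "\<dots> = int (card A) - int (card B)"
        unfolding A_def B_def using finF by (simp add: sum_subtractf sum.If_cases Int_def conj_commute)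
      also have "card B = card A"
      proof -
        have inj: "inj_on (\<lambda>x. x \<otimes> w) A" unfolding A_def F_def inj_on_def using w by auto
        have "(\<lambda>x. x \<otimes> w) ` A = B"
        proof
          show "(\<lambda>x. x \<otimes> w) ` A \<subseteq> B"
          proof
            fix u assume "u \<in> (\<lambda>x. x \<otimes> w) ` A"
            then obtain x where x: "x \<in> A" "u = x \<otimes> w" by blast
            then have xc: "x \<in> carrier G" "x [^] p = y" "\<rho> x = 1" unfolding A_def F_def by auto
            have "u [^] p = y" using xc w wp x(2) True by (simp add: pow_distrib)
            moreover have "\<rho> u = \<omega>" using x(2) xc w \<rho>w rep unfolding is_rep_def by simp
            ultimately show "u \<in> B" unfolding B_def F_def using x(2) xc w by simp
          qed
          show "B \<subseteq> (\<lambda>x. x \<otimes> w) ` A"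
          proof
            fix u assume "u \<in> B"
            then have u: "u \<in> carrier G" "u [^] p = y" "\<rho> u = \<omega>" unfolding B_def F_def by auto
            define x where "x = u \<otimes> inv w"
            have xc: "x \<in> carrier G" unfolding x_def using u w by simp
            have ux: "u = x \<otimes> w" unfolding x_def using u w by (simp add: m_assoc)
            have "x [^] p = u [^] p \<otimes> inv (w [^] p)" unfolding x_def using u w
              by (simp add: pow_distrib nat_pow_inv)
            then have "x [^] p = y" using wp u True by simp
            moreover have "\<rho> x * \<omega> = \<omega>" using ux u xc w \<rho>w rep unfolding is_rep_def by metis
            then have "\<rho> x = 1" using \<omega>0 by simp
            ultimately have "x \<in> A" unfolding A_def F_def using xc by simp
            then show "u \<in> (\<lambda>x. x \<otimes> w) ` A" using ux by blast
          qed
        qed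
        then show ?thesis using card_image[OF inj] by simp
      qed
      finally show ?thesis by simp
    qed
  qed
qed


theorem mainTheorem4:
  fixes G :: "('a, 'b) monoid_scheme" and p e k :: nat and \<rho> :: "'a \<Rightarrow> complex"
  assumes "prime p" and "e \<ge> 1"
    and "comm_group G" and "finite (carrier G)" and "order G = p ^ e"
    and "is_rep G \<rho>" and "rep_level G p \<rho> k" and "k > 0"
    and "\<not> (\<exists>\<tau>. is_rep G \<tau> \<and> (\<forall>x\<in>carrier G. rep_psi G p \<tau> x = \<rho> x))"
  shows "psi_ring G p (b_elem G p \<rho>) = (\<lambda>_. 0)"
  using comm_group.main_in[OF assms(3) assms] .

end
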